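(* Let $\beta\in\mathbb{R}^p$ be fixed. Assume the following: - $(X^TDX)^{-1}$ exists with probability $1$; - $v^g_l<\infty$; - there is a constant $\delta>0$, not depending on $x$, such that $\mathbb{E}[g'(x^T\beta)\mid xx^T]=\delta$. Then $v^g_l>v^g_u$.
   Context: Let $p<n$. The labeled data $(x_1,y_1),\dots,(x_n,y_n)$ are i.i.d. copies of $(x,y)\in\mathbb{R}^p\times\mathbb{R}$. Write $X\in\mathbb{R}^{n\times p}$ for the matrix with rows $x_i^T$. The marginal distribution $P_x$ satisfies $\mathbb{E}[x]=0$. The model is a generalized linear model: $\mathbb{E}[y\mid x]=g(x^T\beta)$ for a known, monotonically increasing, differentiable link function $g$, and $\mathrm{Var}(y\mid x)=\sigma^2$. Notation: - $D$ is the $n\times n$ diagonal matrix with $D_{ii}=g'(x_i^T\beta)$. - $H_g=\mathbb{E}_X[X^TDX]$. - $v^g_l=\mathrm{tr}\big(\mathbb{E}_X[(X^TDX)^{-1}X^TX(X^TDX)^{-1}]H_g\big)$. - $v^g_u=\frac{n-1}{n}\mathrm{tr}\big(H_g^{-1}\mathbb{E}_X[X^TX]\big)$. *)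

theory Defs
  imports "HOL-Probability.Probability"
begin

definition outer_prod :: "real^'p::finite \<Rightarrow> real^'p^'p" where
  "outer_prod v = (\<chi> i j. v $ i * v $ j)"

definition design_matrix :: "('n::finite \<Rightarrow> 'a \<Rightarrow> real^'p) \<Rightarrow> 'a \<Rightarrow> real^'p^'n" where
  "design_matrix xs \<omega> = (\<chi> i. xs i \<omega>)"

definition weight_matrix :: "(real \<Rightarrow> real) \<Rightarrow> real^'p \<Rightarrow> real^'p^'n \<Rightarrow> real^'n^'n" where
  "weight_matrix g \<beta> X = (\<chi> i j. if i = j then deriv g (X $ i \<bullet> \<beta>) else 0)"

definition H_g :: "'a measure \<Rightarrow> (real \<Rightarrow> real) \<Rightarrow> real^'p \<Rightarrow> ('n::finite \<Rightarrow> 'a \<Rightarrow> real^'p) \<Rightarrow> real^'p^'p" where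
  "H_g M g \<beta> xs = integral\<^sup>L M (\<lambda>\<omega>. let X = design_matrix xs \<omega> in
      transpose X ** weight_matrix g \<beta> X ** X)"

definition v_l :: "'a measure \<Rightarrow> (real \<Rightarrow> real) \<Rightarrow> real^'p \<Rightarrow> ('n::finite \<Rightarrow> 'a \<Rightarrow> real^'p) \<Rightarrow> real" where
  "v_l M g \<beta> xs = trace (integral\<^sup>L M (\<lambda>\<omega>. let X = design_matrix xs \<omega>;
        A = transpose X ** weight_matrix g \<beta> X ** X in
      matrix_inv A ** (transpose X ** X) ** matrix_inv A) ** H_g M g \<beta> xs)"

definition v_u :: "'a measure \<Rightarrow> (real \<Rightarrow> real) \<Rightarrow> real^'p \<Rightarrow> ('n::finite \<Rightarrow> 'a \<Rightarrow> real^'p) \<Rightarrow> real" where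
  "v_u M g \<beta> xs = (real CARD('n) - 1) / real CARD('n) *
      trace (matrix_inv (H_g M g \<beta> xs) **
        integral\<^sup>L M (\<lambda>\<omega>. let X = design_matrix xs \<omega> in transpose X ** X))"

end

theory Submission
  imports Defs
begin



definition psd :: "real^'p^'p \<Rightarrow> bool" where
  "psd W \<longleftrightarrow> (\<forall>v. 0 \<le> v \<bullet> (W *v v))"

lemma mm_sub_l: "(A::real^'n^'m) ** (B - C) = A ** B - A ** C"
  by (simp add: matrix_matrix_mult_def vec_eq_iff sum_subtractf algebra_simps)
lemma mm_sub_r: "((A::real^'n^'m) - B) ** C = A ** C - B ** C"
  by (simp add: matrix_matrix_mult_def vec_eq_iff sum_subtractf algebra_simps)
lemma mm_add_r: "((A::real^'n^'m) + B) ** C = A ** C + B ** C"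
  by (simp add: matrix_matrix_mult_def vec_eq_iff sum.distrib algebra_simps)
lemma mm_scale_l: "(c *\<^sub>R (A::real^'n^'m)) ** B = c *\<^sub>R (A ** B)"
  by (simp add: scalar_matrix_assoc)
lemma mm_scale_r: "(A::real^'n^'m) ** (c *\<^sub>R B) = c *\<^sub>R (A ** B)"
  by (simp add: matrix_scalar_ac scalar_matrix_assoc)
lemma trace_scale: "trace (c *\<^sub>R (A::real^'n^'n)) = c * trace A"
  by (simp add: trace_def sum_distrib_left)

lemma matrix_inv_both: "invertible (A::real^'n^'n) \<Longrightarrow> A ** matrix_inv A = mat 1 \<and> matrix_inv A ** A = mat 1"
proof -
  assume "invertible A"
  then have "\<exists>A'. A ** A' = mat 1 \<and> A' ** A = mat 1" by (simp add: invertible_def)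
  from someI_ex[OF this] show ?thesis by (simp add: matrix_inv_def)
qed
lemma matrix_inv_right: "invertible (A::real^'n^'n) \<Longrightarrow> A ** matrix_inv A = mat 1"
  using matrix_inv_both by blast
lemma matrix_inv_left: "invertible (A::real^'n^'n) \<Longrightarrow> matrix_inv A ** A = mat 1"
  using matrix_inv_both by blast
lemma matrix_inv_unique: "invertible (A::real^'n^'n) \<Longrightarrow> B ** A = mat 1 \<Longrightarrow> matrix_inv A = B"
proof -
  assume a: "invertible A" "B ** A = mat 1"
  have "B = B ** (A ** matrix_inv A)" using matrix_inv_right[OF a(1)] by simp
  also have "\<dots> = (B ** A) ** matrix_inv A" by (simp only: matrix_mul_assoc)
  also have "\<dots> = matrix_inv A" by (simp add: a(2))
  finally show ?thesis by simp
qed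
lemma matrix_inv_invertible: "invertible (A::real^'n^'n) \<Longrightarrow> invertible (matrix_inv A)"
  unfolding invertible_def[of "matrix_inv A"]
  by (rule exI[of _ A]) (simp add: matrix_inv_left matrix_inv_right)
lemma matrix_inv_sym: "invertible (A::real^'n^'n) \<Longrightarrow> transpose A = A \<Longrightarrow> transpose (matrix_inv A) = matrix_inv A"
proof -
  assume a: "invertible A" "transpose A = A"
  have "transpose (matrix_inv A) ** transpose A = transpose (A ** matrix_inv A)"
    by (rule matrix_transpose_mul[symmetric])
  also have "A ** matrix_inv A = mat 1" by (rule matrix_inv_right[OF a(1)])
  finally have "transpose (matrix_inv A) ** transpose A = mat 1" by (simp only: transpose_mat)
  then have "transpose (matrix_inv A) ** A = mat 1" by (simp only: a(2))
  then show ?thesis using matrix_inv_unique[OF a(1)] by metis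
qed

lemma matrix_inv_scale: "invertible (A::real^'n^'n) \<Longrightarrow> c \<noteq> 0 \<Longrightarrow> matrix_inv (c *\<^sub>R A) = (1/c) *\<^sub>R matrix_inv A"
proof -
  assume a: "invertible A" "c \<noteq> 0"
  have i: "invertible (c *\<^sub>R A)" using scalar_invertible[OF a(2) a(1)] .
  have "((1/c) *\<^sub>R matrix_inv A) ** (c *\<^sub>R A) = mat 1"
    using a by (simp add: mm_scale_l mm_scale_r matrix_inv_left)
  then show ?thesis using matrix_inv_unique[OF i] by metis
qed

lemma psd_sandwich:
  assumes "transpose Z = Z" "psd P"
  shows "psd (Z ** P ** (Z::real^'n^'n))"
  unfolding psd_def
proof
  fix v
  have "v \<bullet> ((Z ** P ** Z) *v v) = (v v* Z) \<bullet> (P *v (Z *v v))"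
    by (simp add: dot_lmul_matrix matrix_vector_mul_assoc matrix_mul_assoc)
  also have "v v* Z = Z *v v" by (metis assms(1) vector_transpose_matrix)
  finally have e: "v \<bullet> ((Z ** P ** Z) *v v) = (Z *v v) \<bullet> (P *v (Z *v v))" .
  have "0 \<le> (Z *v v) \<bullet> (P *v (Z *v v))" using assms(2) unfolding psd_def by blast
  then show "0 \<le> v \<bullet> ((Z ** P ** Z) *v v)" using e by linarith
qed

lemma sandwich_expand:
  fixes a b P :: "real^'n^'n"
  shows "(a - c *\<^sub>R b) ** P ** (a - c *\<^sub>R b) =
     a ** P ** a - c *\<^sub>R (a ** P ** b) - c *\<^sub>R (b ** P ** a) + (c*c) *\<^sub>R (b ** P ** b)"
  by (simp only: mm_sub_l mm_sub_r mm_scale_l mm_scale_r) (simp add: vec_eq_iff algebra_simps)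


lemma bm_vec_lambda:
  fixes f :: "'i::finite \<Rightarrow> 'a \<Rightarrow> 'b::euclidean_space"
  assumes "\<And>i. f i \<in> borel_measurable M"
  shows "(\<lambda>x. \<chi> i. f i x) \<in> borel_measurable M"
  unfolding borel_measurable_euclidean_space[where 'c="'b^'i"]
proof
  fix b :: "'b^'i" assume "b \<in> Basis"
  then obtain j u where b: "b = axis j u" "u \<in> Basis" unfolding Basis_vec_def by auto
  have "(\<lambda>x. (\<chi> i. f i x) \<bullet> b) = (\<lambda>x. f j x \<bullet> u)" by (simp add: b inner_axis)
  then show "(\<lambda>x. (\<chi> i. f i x) \<bullet> b) \<in> borel_measurable M"
    using assms by simp
qed

lemma bm_vec_nth:
  fixes f :: "'a \<Rightarrow> 'b::euclidean_space^'i::finite"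
  assumes "f \<in> borel_measurable M"
  shows "(\<lambda>x. f x $ i) \<in> borel_measurable M"
proof -
  have "(\<lambda>y::'b^'i. y $ i) \<in> borel_measurable borel"
    by (intro borel_measurable_continuous_onI continuous_intros)
  from measurable_compose[OF assms this] show ?thesis by simp
qed

lemma bm_mmult:
  fixes f :: "'a \<Rightarrow> real^'n::finite^'m::finite" and g :: "'a \<Rightarrow> real^'k::finite^'n"
  assumes "f \<in> borel_measurable M" "g \<in> borel_measurable M"
  shows "(\<lambda>x. f x ** g x) \<in> borel_measurable M"
  unfolding matrix_matrix_mult_def
  by (intro bm_vec_lambda borel_measurable_sum borel_measurable_times bm_vec_nth assms)

lemma bm_transpose:
  fixes f :: "'a \<Rightarrow> real^'n::finite^'m::finite"
  assumes "f \<in> borel_measurable M"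
  shows "(\<lambda>x. transpose (f x)) \<in> borel_measurable M"
  unfolding transpose_def
  by (intro bm_vec_lambda bm_vec_nth assms)

lemma bm_trace:
  fixes f :: "'a \<Rightarrow> real^'n::finite^'n"
  assumes "f \<in> borel_measurable M"
  shows "(\<lambda>x. trace (f x)) \<in> borel_measurable M"
  unfolding trace_def
  by (intro borel_measurable_sum bm_vec_nth assms)

lemma cont_if_const: "continuous_on S f \<Longrightarrow> continuous_on S g \<Longrightarrow> continuous_on S (\<lambda>x. if P then f x else g x)"
  by (cases P) auto

lemma continuous_on_det: "continuous_on S (\<lambda>A::real^'n::finite^'n. det A)"
  unfolding det_def by (intro continuous_intros)

lemma matrix_inv_noninv:
  assumes "\<not> invertible (A::real^'n::finite^'n)"
  shows "matrix_inv A = (SOME A'. False)"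
proof -
  have "(\<lambda>A'. A ** A' = mat 1 \<and> A' ** A = mat 1) = (\<lambda>A'. False)"
    using assms unfolding invertible_def by auto
  then show ?thesis unfolding matrix_inv_def by simp
qed

lemma matrix_inv_cramer:
  assumes "invertible (A::real^'n::finite^'n)"
  shows "matrix_inv A = (\<chi> i j. det (\<chi> a b. if b = i then (if a = j then 1 else 0) else A$a$b) / det A)"
proof -
  have d: "det A \<noteq> 0" using assms invertible_det_nz by blast
  show ?thesis
  proof (subst vec_eq_iff, intro allI, subst vec_eq_iff, intro allI)
    fix i j
    define e :: "real^'n" where "e = (\<chi> a. if a = j then 1 else 0)"
    have "A *v (matrix_inv A *v e) = e"
      by (simp add: matrix_vector_mul_assoc matrix_inv_right[OF assms])
    then have "matrix_inv A *v e = (\<chi> k. det(\<chi> a b. if b=k then e$a else A$a$b) / det A)"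
      using cramer[OF d] by blast
    then have "(matrix_inv A *v e) $ i = det(\<chi> a b. if b=i then e$a else A$a$b) / det A"
      by simp
    moreover have "(matrix_inv A *v e) $ i = matrix_inv A $ i $ j"
      by (simp add: matrix_vector_mult_def e_def if_distrib cong: if_cong)
    ultimately have X: "matrix_inv A $ i $ j = det(\<chi> a b. if b=i then e$a else A$a$b) / det A"
      by simp
    have "(\<chi> a b. if b=i then e$a else A$a$b) = (\<chi> a b. if b = i then (if a = j then 1 else 0) else A$a$b)"
      by (simp add: e_def vec_eq_iff)
    then show "matrix_inv A $ i $ j = (\<chi> i j. det (\<chi> a b. if b = i then (if a = j then 1 else 0) else A$a$b) / det A) $ i $ j"
      using X by simp
  qed
qed

lemma bm_matrix_inv: "(\<lambda>A::real^'n::finite^'n. matrix_inv A) \<in> borel_measurable borel"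
proof -
  have eq: "(\<lambda>A::real^'n^'n. matrix_inv A) = (\<lambda>A. if det A = 0 then (SOME A'. False)
     else (\<chi> i j. det (\<chi> a b. if b = i then (if a = j then 1 else 0) else A$a$b) / det A))"
    using matrix_inv_noninv matrix_inv_cramer invertible_det_nz by fastforce
  have dm: "(\<lambda>A::real^'n^'n. det A) \<in> borel_measurable borel"
    by (rule borel_measurable_continuous_onI[OF continuous_on_det])
  have nm: "(\<lambda>A::real^'n^'n. det (\<chi> a b. if b = i then (if a = j then 1 else 0) else A$a$b)) \<in> borel_measurable borel" for i j
  proof -
    have "continuous_on UNIV (\<lambda>A::real^'n^'n. (\<chi> a b. if b = i then (if a = j then 1 else 0) else A$a$b))"
      by (intro continuous_on_vec_lambda cont_if_const continuous_intros)
    then have c: "(\<lambda>A::real^'n^'n. (\<chi> a b. if b = i then (if a = j then 1 else 0) else A$a$b) :: real^'n^'n) \<in> borel_measurable borel"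
      by (rule borel_measurable_continuous_onI)
    from measurable_compose[OF c dm] show ?thesis by simp
  qed
  have "{A::real^'n^'n. det A = 0} \<in> sets borel"
    using dm by measurable
  then show ?thesis unfolding eq
    by (intro measurable_If bm_vec_lambda borel_measurable_divide nm dm) auto
qed

lemma bm_matrix_inv':
  fixes f :: "'a \<Rightarrow> real^'n::finite^'n"
  assumes "f \<in> borel_measurable M"
  shows "(\<lambda>x. matrix_inv (f x)) \<in> borel_measurable M"
  using measurable_compose[OF assms bm_matrix_inv] by simp

lemma bm_deriv:
  fixes g :: "real \<Rightarrow> real"
  assumes "\<And>t. g differentiable (at t)"
  shows "deriv g \<in> borel_measurable borel"
proof (rule borel_measurable_LIMSEQ_real[where u="\<lambda>n t. (g (t + inverse (real (Suc n))) - g t) / inverse (real (Suc n))"])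
  fix t :: real
  have "DERIV g t :> deriv g t" using assms DERIV_deriv_iff_real_differentiable by blast
  then have "((\<lambda>h. (g (t + h) - g t) / h) \<longlongrightarrow> deriv g t) (at 0)" by (simp add: DERIV_def)
  then show "(\<lambda>n. (g (t + inverse (real (Suc n))) - g t) / inverse (real (Suc n))) \<longlonglongrightarrow> deriv g t"
    unfolding tendsto_at_iff_sequentially[where s=UNIV] comp_def
    using LIMSEQ_inverse_real_of_nat by auto
next
  fix n
  have "continuous_on UNIV g"
    using assms differentiable_imp_continuous_within continuous_at_imp_continuous_on by blast
  then have gm: "g \<in> borel_measurable borel" by (rule borel_measurable_continuous_onI)
  have "(\<lambda>t. g (t + inverse (real (Suc n)))) \<in> borel_measurable borel"
    using measurable_compose[OF _ gm, of "\<lambda>t. t + inverse (real (Suc n))"] by simp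
  then show "(\<lambda>t. (g (t + inverse (real (Suc n))) - g t) / inverse (real (Suc n))) \<in> borel_measurable borel"
    using gm by measurable
qed


lemma invertible_of_ker:
  fixes B :: "real^'n::finite^'n"
  assumes "\<And>v. B *v v = 0 \<Longrightarrow> v = 0"
  shows "invertible B"
  using assms matrix_left_invertible_ker[of B] invertible_left_inverse[of B] by blast

lemma outer_mulv: "outer_prod u *v v = (u \<bullet> v) *\<^sub>R u"
  by (simp add: outer_prod_def matrix_vector_mult_def vec_eq_iff inner_vec_def sum_distrib_left mult_ac)

lemma trace_outer: "trace (W ** outer_prod v) = v \<bullet> (W *v v)"
  by (simp add: trace_def matrix_matrix_mult_def outer_prod_def inner_vec_def matrix_vector_mult_def
      sum_distrib_left mult_ac)

lemma trace_outer': "trace (outer_prod v ** W) = v \<bullet> (W *v v)"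
  using trace_outer trace_mul_sym by metis

lemma psd_outer: "psd (outer_prod u)"
  unfolding psd_def outer_mulv by (simp add: inner_commute)

lemma trace_sum_r: "trace (W ** (\<Sum>i\<in>I. F i)) = (\<Sum>i\<in>I. trace (W ** F i))"
  by (simp add: trace_def matrix_matrix_mult_def sum_distrib_left sum_component sum.swap[of _ _ I])

lemma mulv_sum: "(\<Sum>i\<in>I. F i) *v v = (\<Sum>i\<in>I. F i *v v)"
  by (simp add: matrix_vector_mult_def vec_eq_iff sum_distrib_right sum_component sum.swap[of _ UNIV])

lemma smul_mulv: "(c *\<^sub>R (F::real^'n::finite^'m::finite)) *v v = c *\<^sub>R (F *v v)"
  by (simp add: matrix_vector_mult_def vec_eq_iff sum_distrib_left mult_ac)

lemma trace_scale_r: "trace (W ** (c *\<^sub>R F)) = c * trace (W ** F)"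
  by (simp add: mm_scale_r trace_scale)

lemma transpose_sum: "transpose (\<Sum>i\<in>I. F i) = (\<Sum>i\<in>I. transpose (F i :: real^'n::finite^'n))"
  by (simp add: transpose_def vec_eq_iff sum_component)

lemma transpose_outer: "transpose (outer_prod u) = outer_prod u"
  by (simp add: transpose_def outer_prod_def vec_eq_iff mult.commute)

lemma transpose_diff: "transpose ((A::real^'n::finite^'n) - B) = transpose A - transpose B"
  by (simp add: transpose_def vec_eq_iff)

lemma sym_sum_outer: "transpose (\<Sum>i\<in>I. c i *\<^sub>R outer_prod (u i)) = (\<Sum>i\<in>I. c i *\<^sub>R outer_prod (u i))"
  by (simp add: transpose_sum transpose_scalar transpose_outer)

lemma quad_sum_outer: "v \<bullet> ((\<Sum>i\<in>I. c i *\<^sub>R outer_prod (u i)) *v v) = (\<Sum>i\<in>I. c i * (u i \<bullet> v)^2)"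
  by (simp add: mulv_sum smul_mulv outer_mulv inner_sum_right power2_eq_square inner_commute mult_ac)

lemma psd_sum_outer: "(\<And>i. i \<in> I \<Longrightarrow> 0 \<le> c i) \<Longrightarrow> psd (\<Sum>i\<in>I. c i *\<^sub>R outer_prod (u i))"
  unfolding psd_def quad_sum_outer by (auto intro: sum_nonneg)

lemma trace_expand:
  fixes a b P S :: "real^'n::finite^'n"
  shows "trace (((a - c *\<^sub>R b) ** P ** (a - c *\<^sub>R b)) ** S) =
     trace (a ** P ** a ** S) - c * trace (a ** P ** b ** S) - c * trace (b ** P ** a ** S) + (c*c) * trace (b ** P ** b ** S)"
  unfolding sandwich_expand
  by (simp add: mm_sub_r mm_add_r mm_scale_l trace_add trace_sub trace_scale)

lemma transpose_Wsym:
  fixes a b :: "real^'n::finite^'n"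
  assumes "transpose a = a" "transpose b = b"
  shows "transpose (a - c *\<^sub>R b) = a - c *\<^sub>R b"
  using assms by (simp add: transpose_diff transpose_scalar)

lemma main_alg:
  fixes A B S :: "real^'n::finite^'n"
  assumes SP: "\<And>W. psd W \<Longrightarrow> 0 \<le> trace (W ** S)"
    and iA: "invertible A" and iB: "invertible B"
    and sA: "transpose A = A" and sB: "transpose B = B"
    and pA: "psd A" and pB: "psd B" and c: "c > 0"
  shows "3*c^2 * trace (matrix_inv B ** S) \<le>
         trace (matrix_inv A ** B ** matrix_inv A ** S) + 2*c^3 * trace (matrix_inv B ** A ** matrix_inv B ** S)"
proof -
  define a where "a = matrix_inv A"
  define b where "b = matrix_inv B"
  have sa: "transpose a = a" unfolding a_def by (rule matrix_inv_sym[OF iA sA])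
  have sb: "transpose b = b" unfolding b_def by (rule matrix_inv_sym[OF iB sB])
  have sW: "transpose (a - c *\<^sub>R b) = a - c *\<^sub>R b" by (rule transpose_Wsym[OF sa sb])
  have aA: "a ** A = mat 1" "A ** a = mat 1" unfolding a_def using matrix_inv_left[OF iA] matrix_inv_right[OF iA] by auto
  have bB: "b ** B = mat 1" "B ** b = mat 1" unfolding b_def using matrix_inv_left[OF iB] matrix_inv_right[OF iB] by auto
  have e1: "a ** B ** b = a" by (metis bB(2) matrix_mul_assoc matrix_mul_rid)
  have e2: "b ** B ** a = a" by (metis bB(1) matrix_mul_lid)
  have e3: "b ** B ** b = b" by (metis bB(1) matrix_mul_lid)
  have e4: "a ** A ** a = a" by (metis aA(1) matrix_mul_lid)
  have e5: "a ** A ** b = b" by (metis aA(1) matrix_mul_lid)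
  have e6: "b ** A ** a = b" by (metis aA(2) matrix_mul_assoc matrix_mul_rid)
  have i: "0 \<le> trace (((a - c *\<^sub>R b) ** B ** (a - c *\<^sub>R b)) ** S)"
    by (rule SP[OF psd_sandwich[OF sW pB]])
  have ii: "0 \<le> trace (((a - c *\<^sub>R b) ** A ** (a - c *\<^sub>R b)) ** S)"
    by (rule SP[OF psd_sandwich[OF sW pA]])
  define t1 where "t1 = trace (a ** B ** a ** S)"
  define ta where "ta = trace (a ** S)"
  define tb where "tb = trace (b ** S)"
  define t2 where "t2 = trace (b ** A ** b ** S)"
  have i': "0 \<le> t1 - 2*c*ta + c*c*tb"
    using i unfolding trace_expand e1 e2 e3 t1_def ta_def tb_def by simp
  have ii': "0 \<le> ta - 2*c*tb + c*c*t2"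
    using ii unfolding trace_expand e4 e5 e6 t2_def ta_def tb_def by simp
  have "0 \<le> 2*c*(ta - 2*c*tb + c*c*t2)" using ii' c by simp
  then have "3*c^2*tb \<le> t1 + 2*c^3*t2" using i' by (simp add: algebra_simps power2_eq_square power3_eq_cube)
  then show ?thesis unfolding t1_def tb_def t2_def a_def b_def .
qed

lemma second_alg:
  fixes B S :: "real^'n::finite^'n"
  assumes SP: "\<And>W. psd W \<Longrightarrow> 0 \<le> trace (W ** S)"
    and iS: "invertible S" and iB: "invertible B"
    and sS: "transpose S = S" and sB: "transpose B = B" and pB: "psd B"
  shows "2 * real CARD('n) \<le> trace (matrix_inv B ** S) + trace (matrix_inv S ** B)"
proof -
  define s where "s = matrix_inv S"
  define b where "b = matrix_inv B"
  have ss: "transpose s = s" unfolding s_def by (rule matrix_inv_sym[OF iS sS])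
  have sb: "transpose b = b" unfolding b_def by (rule matrix_inv_sym[OF iB sB])
  have sW: "transpose (b - 1 *\<^sub>R s) = b - 1 *\<^sub>R s" by (rule transpose_Wsym[OF sb ss])
  have bB: "b ** B = mat 1" "B ** b = mat 1" unfolding b_def using matrix_inv_left[OF iB] matrix_inv_right[OF iB] by auto
  have sS1: "s ** S = mat 1" unfolding s_def using matrix_inv_left[OF iS] by auto
  have e1: "b ** B ** s = s" by (metis bB(1) matrix_mul_lid)
  have e2: "s ** B ** b = s" by (metis bB(2) matrix_mul_assoc matrix_mul_rid)
  have e3: "b ** B ** b = b" by (metis bB(1) matrix_mul_lid)
  have e4: "s ** B ** s ** S = s ** B" by (metis sS1 matrix_mul_assoc matrix_mul_rid)
  have i: "0 \<le> trace (((b - 1 *\<^sub>R s) ** B ** (b - 1 *\<^sub>R s)) ** S)"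
    by (rule SP[OF psd_sandwich[OF sW pB]])
  have t: "trace (s ** S) = real CARD('n)" by (simp add: sS1 trace_I)
  have "0 \<le> trace (b ** S) - trace (s ** S) - trace (s ** S) + trace (s ** B)"
    using i unfolding trace_expand e1 e2 e3 e4 by simp
  then have "2 * real CARD('n) \<le> trace (b ** S) + trace (s ** B)" using t by simp
  then show ?thesis unfolding s_def b_def .
qed


lemma outer_meas: "(\<lambda>z::real^'p::finite. outer_prod z) \<in> borel_measurable borel"
  unfolding outer_prod_def
  by (intro borel_measurable_continuous_onI continuous_intros)

lemma deriv_nonneg:
  fixes g :: "real \<Rightarrow> real"
  assumes "mono g" "g differentiable (at t)"
  shows "0 \<le> deriv g t"
proof -
  have "DERIV g t :> deriv g t" using assms DERIV_deriv_iff_real_differentiable by blast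
  then have "((\<lambda>h. (g (t + h) - g t) / h) \<longlongrightarrow> deriv g t) (at 0)" by (simp add: DERIV_def)
  then have L: "(\<lambda>n. (g (t + inverse (real (Suc n))) - g t) / inverse (real (Suc n))) \<longlonglongrightarrow> deriv g t"
    unfolding tendsto_at_iff_sequentially[where s=UNIV] comp_def
    using LIMSEQ_inverse_real_of_nat by auto
  have *: "0 \<le> (g (t + inverse (real (Suc n))) - g t) / inverse (real (Suc n))" for n
  proof -
    have "t \<le> t + inverse (real (Suc n))" by simp
    then have "g t \<le> g (t + inverse (real (Suc n)))" by (rule monoD[OF assms(1)])
    then show ?thesis by (intro divide_nonneg_pos) auto
  qed
  show ?thesis by (rule LIMSEQ_le_const[OF L]) (use * in blast)
qed

locale glm = prob_space M
  for M :: "'a measure" +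
  fixes x :: "'a \<Rightarrow> real^'p::finite"
    and xs :: "'n::finite \<Rightarrow> 'a \<Rightarrow> real^'p"
    and g :: "real \<Rightarrow> real"
    and \<beta> :: "real^'p"
    and \<delta> :: real
  assumes x_meas[measurable]: "x \<in> borel_measurable M"
    and indep: "indep_vars (\<lambda>_. borel) xs UNIV"
    and ident: "\<And>i. distr M borel (xs i) = distr M borel x"
    and int_outer: "integrable M (\<lambda>\<omega>. outer_prod (x \<omega>))"
    and g_mono: "mono g" and g_diff: "\<And>t. g differentiable (at t)"
    and delta_pos: "\<delta> > 0"
    and cond: "AE \<omega> in M. real_cond_exp M (vimage_algebra (space M) (\<lambda>\<omega>. outer_prod (x \<omega>)) borel)
                 (\<lambda>\<omega>. deriv g (x \<omega> \<bullet> \<beta>)) \<omega> = \<delta>"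
begin

abbreviation "Fx \<equiv> vimage_algebra (space M) (\<lambda>\<omega>. outer_prod (x \<omega>)) borel"

lemma xs_meas[measurable]: "xs i \<in> borel_measurable M"
  using indep unfolding indep_vars_def by auto

lemma dg_meas[measurable]: "(\<lambda>z::real^'p. deriv g (z \<bullet> \<beta>)) \<in> borel_measurable borel"
proof -
  have "(\<lambda>z::real^'p. z \<bullet> \<beta>) \<in> borel_measurable borel" by measurable
  from measurable_compose[OF this bm_deriv[OF g_diff]] show ?thesis .
qed

lemma dg_nonneg: "0 \<le> deriv g t"
  using deriv_nonneg[OF g_mono g_diff] .

lemma outer_x_meas[measurable]: "(\<lambda>\<omega>. outer_prod (x \<omega>)) \<in> borel_measurable M"
  using measurable_compose[OF x_meas outer_meas] .

lemma subalg: "sigma_finite_subalgebra M Fx"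
proof -
  have "subalgebra M Fx"
    unfolding subalgebra_def
    using sets_image_in_sets[OF refl outer_x_meas] by simp
  then have "finite_measure_subalgebra M Fx"
    by (intro finite_measure_subalgebra.intro finite_measure_subalgebra_axioms.intro) unfold_locales
  then show ?thesis by (rule finite_measure_subalgebra_is_sigma_finite)
qed

lemma d_meas[measurable]: "(\<lambda>\<omega>. deriv g (x \<omega> \<bullet> \<beta>)) \<in> borel_measurable M"
  using measurable_compose[OF x_meas dg_meas] .

lemma cexp: "AE \<omega> in M. nn_cond_exp M Fx (\<lambda>\<omega>. ennreal (deriv g (x \<omega> \<bullet> \<beta>))) \<omega> = ennreal \<delta>"
proof -
  have z: "(\<lambda>\<omega>. ennreal (- deriv g (x \<omega> \<bullet> \<beta>))) = (\<lambda>\<omega>. 0)"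
  proof
    fix \<omega> show "ennreal (- deriv g (x \<omega> \<bullet> \<beta>)) = 0"
      using dg_nonneg[of "x \<omega> \<bullet> \<beta>"] by (intro ennreal_neg) linarith
  qed
  have c0: "(\<lambda>\<omega>. 0::ennreal) \<in> borel_measurable Fx" by (rule measurable_const) simp
  have "AE \<omega> in M. (\<lambda>\<omega>. 0) \<omega> = nn_cond_exp M Fx (\<lambda>\<omega>. 0) \<omega>"
    by (rule sigma_finite_subalgebra.nn_cond_exp_F_meas[OF subalg c0])
  then show ?thesis using cond
  proof eventually_elim
    case (elim \<omega>)
    let ?y = "nn_cond_exp M Fx (\<lambda>\<omega>. ennreal (deriv g (x \<omega> \<bullet> \<beta>))) \<omega>"
    have e: "real_cond_exp M Fx (\<lambda>\<omega>. deriv g (x \<omega> \<bullet> \<beta>)) \<omega> = enn2real ?y - enn2real (nn_cond_exp M Fx (\<lambda>\<omega>. 0) \<omega>)"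
      unfolding real_cond_exp_def z ..
    have "enn2real ?y = \<delta>" using elim(2) unfolding e elim(1)[symmetric] by simp
    then have "?y \<noteq> \<top>" using delta_pos by auto
    then have "?y = ennreal (enn2real ?y)" by (simp add: less_top)
    then show ?case using \<open>enn2real ?y = \<delta>\<close> by simp
  qed
qed

lemma cond_nn:
  fixes k :: "real^'p^'p \<Rightarrow> ennreal"
  assumes k[measurable]: "k \<in> borel_measurable borel"
  shows "(\<integral>\<^sup>+\<omega>. ennreal (deriv g (x \<omega> \<bullet> \<beta>)) * k (outer_prod (x \<omega>)) \<partial>M)
       = ennreal \<delta> * (\<integral>\<^sup>+\<omega>. k (outer_prod (x \<omega>)) \<partial>M)"
proof -
  have o: "(\<lambda>\<omega>. outer_prod (x \<omega>)) \<in> measurable Fx borel"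
    by (rule measurable_vimage_algebra1) simp
  have f: "(\<lambda>\<omega>. k (outer_prod (x \<omega>))) \<in> borel_measurable Fx"
    using measurable_compose[OF o k] .
  have "(\<integral>\<^sup>+\<omega>. ennreal (deriv g (x \<omega> \<bullet> \<beta>)) * k (outer_prod (x \<omega>)) \<partial>M)
      = (\<integral>\<^sup>+\<omega>. k (outer_prod (x \<omega>)) * ennreal (deriv g (x \<omega> \<bullet> \<beta>)) \<partial>M)"
    by (simp add: mult.commute)
  also have "\<dots> = (\<integral>\<^sup>+\<omega>. k (outer_prod (x \<omega>)) * nn_cond_exp M Fx (\<lambda>\<omega>. ennreal (deriv g (x \<omega> \<bullet> \<beta>))) \<omega> \<partial>M)"
    by (rule sigma_finite_subalgebra.nn_cond_exp_intg[OF subalg f, symmetric]) simp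
  also have "\<dots> = (\<integral>\<^sup>+\<omega>. ennreal \<delta> * k (outer_prod (x \<omega>)) \<partial>M)"
    by (rule nn_integral_cong_AE) (use cexp in \<open>auto simp: mult.commute\<close>)
  also have "\<dots> = ennreal \<delta> * (\<integral>\<^sup>+\<omega>. k (outer_prod (x \<omega>)) \<partial>M)"
    by (rule nn_integral_cmult) simp
  finally show ?thesis .
qed

end


lemma integral_comp2:
  fixes f :: "'a \<Rightarrow> real^'p::finite^'q::finite"
  assumes "integrable M f"
  shows "integral\<^sup>L M f $ a $ b = (\<integral>\<omega>. f \<omega> $ a $ b \<partial>M)"
proof -
  have bl: "bounded_linear (\<lambda>Z::real^'p^'q. Z $ a $ b)"
    by (rule bounded_linear_compose[OF bounded_linear_vec_nth bounded_linear_vec_nth])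
  show ?thesis using integral_bounded_linear[OF bl assms] by simp
qed

lemma integrable_comp2:
  fixes f :: "'a \<Rightarrow> real^'p::finite^'q::finite"
  assumes "integrable M f"
  shows "integrable M (\<lambda>\<omega>. f \<omega> $ a $ b)"
proof -
  have bl: "bounded_linear (\<lambda>Z::real^'p^'q. Z $ a $ b)"
    by (rule bounded_linear_compose[OF bounded_linear_vec_nth bounded_linear_vec_nth])
  show ?thesis using integrable_bounded_linear[OF bl assms] by simp
qed

context glm
begin

lemma nn_transfer:
  fixes k :: "real^'p \<Rightarrow> ennreal"
  assumes [measurable]: "k \<in> borel_measurable borel"
  shows "(\<integral>\<^sup>+\<omega>. k (xs i \<omega>) \<partial>M) = (\<integral>\<^sup>+\<omega>. k (x \<omega>) \<partial>M)"
proof -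
  have "(\<integral>\<^sup>+\<omega>. k (xs i \<omega>) \<partial>M) = (\<integral>\<^sup>+z. k z \<partial>distr M borel (xs i))"
    by (rule nn_integral_distr[symmetric]) simp_all
  also have "\<dots> = (\<integral>\<^sup>+z. k z \<partial>distr M borel x)" by (simp add: ident)
  also have "\<dots> = (\<integral>\<^sup>+\<omega>. k (x \<omega>) \<partial>M)"
    by (rule nn_integral_distr) simp_all
  finally show ?thesis .
qed

lemma bochner_transfer:
  fixes f :: "real^'p \<Rightarrow> 'b::{banach, second_countable_topology}"
  assumes [measurable]: "f \<in> borel_measurable borel"
  shows "integrable M (\<lambda>\<omega>. f (xs i \<omega>)) \<longleftrightarrow> integrable M (\<lambda>\<omega>. f (x \<omega>))"
    and "(\<integral>\<omega>. f (xs i \<omega>) \<partial>M) = (\<integral>\<omega>. f (x \<omega>) \<partial>M)"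
proof -
  show "integrable M (\<lambda>\<omega>. f (xs i \<omega>)) \<longleftrightarrow> integrable M (\<lambda>\<omega>. f (x \<omega>))"
    using integrable_distr_eq[of "xs i" M borel f] integrable_distr_eq[of x M borel f] ident[of i] by simp
  have "(\<integral>\<omega>. f (xs i \<omega>) \<partial>M) = integral\<^sup>L (distr M borel (xs i)) f"
    by (rule integral_distr[symmetric]) simp_all
  also have "\<dots> = integral\<^sup>L (distr M borel x) f" by (simp add: ident)
  also have "\<dots> = (\<integral>\<omega>. f (x \<omega>) \<partial>M)"
    by (rule integral_distr) simp_all
  finally show "(\<integral>\<omega>. f (xs i \<omega>) \<partial>M) = (\<integral>\<omega>. f (x \<omega>) \<partial>M)" .
qed

lemma int_outer_xs: "integrable M (\<lambda>\<omega>. outer_prod (xs i \<omega>))"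
  and integral_outer_xs: "(\<integral>\<omega>. outer_prod (xs i \<omega>) \<partial>M) = (\<integral>\<omega>. outer_prod (x \<omega>) \<partial>M)"
  using bochner_transfer[OF outer_meas, of i] int_outer by auto

lemma dout_meas[measurable]: "(\<lambda>z::real^'p. deriv g (z \<bullet> \<beta>) *\<^sub>R outer_prod z) \<in> borel_measurable borel"
  using dg_meas outer_meas by (rule borel_measurable_scaleR)

lemma int_dout: "integrable M (\<lambda>\<omega>. deriv g (x \<omega> \<bullet> \<beta>) *\<^sub>R outer_prod (x \<omega>))"
proof -
  have m: "(\<lambda>\<omega>. deriv g (x \<omega> \<bullet> \<beta>) *\<^sub>R outer_prod (x \<omega>)) \<in> borel_measurable M"
    using measurable_compose[OF x_meas dout_meas] .
  have nm: "(\<lambda>Z::real^'p^'p. ennreal (norm Z)) \<in> borel_measurable borel" by measurable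
  have "(\<integral>\<^sup>+\<omega>. ennreal (norm (deriv g (x \<omega> \<bullet> \<beta>) *\<^sub>R outer_prod (x \<omega>))) \<partial>M)
     = (\<integral>\<^sup>+\<omega>. ennreal (deriv g (x \<omega> \<bullet> \<beta>)) * ennreal (norm (outer_prod (x \<omega>))) \<partial>M)"
    by (intro nn_integral_cong) (simp add: dg_nonneg ennreal_mult)
  also have "\<dots> = ennreal \<delta> * (\<integral>\<^sup>+\<omega>. ennreal (norm (outer_prod (x \<omega>))) \<partial>M)"
    using cond_nn[OF nm] .
  also have "\<dots> < \<infinity>"
    using int_outer unfolding integrable_iff_bounded by (simp add: ennreal_mult_less_top)
  finally show ?thesis using m unfolding integrable_iff_bounded by simp
qed

lemma integral_dout: "(\<integral>\<omega>. deriv g (x \<omega> \<bullet> \<beta>) *\<^sub>R outer_prod (x \<omega>) \<partial>M) = \<delta> *\<^sub>R (\<integral>\<omega>. outer_prod (x \<omega>) \<partial>M)"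
proof (subst vec_eq_iff, intro allI, subst vec_eq_iff, intro allI)
  fix a b
  let ?f = "\<lambda>\<omega>. outer_prod (x \<omega>) $ a $ b" and ?d = "\<lambda>\<omega>. deriv g (x \<omega> \<bullet> \<beta>)"
  have o: "(\<lambda>\<omega>. outer_prod (x \<omega>)) \<in> measurable Fx borel"
    by (rule measurable_vimage_algebra1) simp
  have fF: "?f \<in> borel_measurable Fx" using bm_vec_nth[OF bm_vec_nth[OF o]] .
  have i1: "integrable M (\<lambda>\<omega>. ?f \<omega> * ?d \<omega>)"
    using integrable_comp2[OF int_dout, of a b] by (simp add: mult.commute)
  have "(\<integral>\<omega>. ?f \<omega> * ?d \<omega> \<partial>M) = (\<integral>\<omega>. ?f \<omega> * real_cond_exp M Fx ?d \<omega> \<partial>M)"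
    by (rule sigma_finite_subalgebra.real_cond_exp_intg(2)[OF subalg i1 fF, symmetric]) simp
  also have "\<dots> = (\<integral>\<omega>. ?f \<omega> * \<delta> \<partial>M)"
  proof (rule integral_cong_AE)
    show "(\<lambda>\<omega>. ?f \<omega> * real_cond_exp M Fx ?d \<omega>) \<in> borel_measurable M"
      using bm_vec_nth[OF bm_vec_nth[OF outer_x_meas]] by measurable
    show "(\<lambda>\<omega>. ?f \<omega> * \<delta>) \<in> borel_measurable M"
      using bm_vec_nth[OF bm_vec_nth[OF outer_x_meas]] by measurable
    show "AE \<omega> in M. ?f \<omega> * real_cond_exp M Fx ?d \<omega> = ?f \<omega> * \<delta>"
      using cond by eventually_elim simp
  qed
  also have "\<dots> = \<delta> * (\<integral>\<omega>. ?f \<omega> \<partial>M)" by simp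
  finally have e: "(\<integral>\<omega>. ?f \<omega> * ?d \<omega> \<partial>M) = \<delta> * (\<integral>\<omega>. ?f \<omega> \<partial>M)" .
  show "(\<integral>\<omega>. deriv g (x \<omega> \<bullet> \<beta>) *\<^sub>R outer_prod (x \<omega>) \<partial>M) $ a $ b = (\<delta> *\<^sub>R (\<integral>\<omega>. outer_prod (x \<omega>) \<partial>M)) $ a $ b"
    using e by (simp add: integral_comp2[OF int_dout] integral_comp2[OF int_outer] mult.commute)
qed

lemma int_dout_xs: "integrable M (\<lambda>\<omega>. deriv g (xs i \<omega> \<bullet> \<beta>) *\<^sub>R outer_prod (xs i \<omega>))"
  and integral_dout_xs: "(\<integral>\<omega>. deriv g (xs i \<omega> \<bullet> \<beta>) *\<^sub>R outer_prod (xs i \<omega>) \<partial>M) = \<delta> *\<^sub>R (\<integral>\<omega>. outer_prod (x \<omega>) \<partial>M)"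
  using bochner_transfer[OF dout_meas, of i] int_dout integral_dout by auto

end


context glm
begin

lemma cond_nn_mu:
  fixes k :: "real^'p^'p \<Rightarrow> ennreal"
  assumes k[measurable]: "k \<in> borel_measurable borel"
  shows "(\<integral>\<^sup>+z. ennreal (deriv g (z \<bullet> \<beta>)) * k (outer_prod z) \<partial>distr M borel x)
       = ennreal \<delta> * (\<integral>\<^sup>+z. k (outer_prod z) \<partial>distr M borel x)"
proof -
  have m1: "(\<lambda>z. ennreal (deriv g (z \<bullet> \<beta>)) * k (outer_prod z)) \<in> borel_measurable borel"
    using dg_meas measurable_compose[OF outer_meas k] by measurable
  have m2: "(\<lambda>z. k (outer_prod z)) \<in> borel_measurable borel"
    using measurable_compose[OF outer_meas k] .
  show ?thesis
    using cond_nn[OF k] by (simp add: nn_integral_distr m1 m2)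
qed

lemma key:
  fixes \<Phi> :: "real^'p^'p^'n \<Rightarrow> ennreal"
  assumes Phi[measurable]: "\<Phi> \<in> borel_measurable borel"
  shows "(\<integral>\<^sup>+\<omega>. ennreal (deriv g (xs i \<omega> \<bullet> \<beta>)) * \<Phi> (\<chi> j. outer_prod (xs j \<omega>)) \<partial>M)
       = ennreal \<delta> * (\<integral>\<^sup>+\<omega>. \<Phi> (\<chi> j. outer_prod (xs j \<omega>)) \<partial>M)"
proof -
  let ?mu = "distr M borel x"
  interpret mu: prob_space ?mu by (rule prob_space_distr) simp
  let ?P = "PiM UNIV (\<lambda>_::'n. ?mu)"
  let ?B = "PiM UNIV (\<lambda>_::'n. (borel :: (real^'p) measure))"
  have Ym: "(\<lambda>\<omega>. \<lambda>j\<in>UNIV. xs j \<omega>) \<in> measurable M ?B"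
    by (rule measurable_restrict) simp
  have D: "distr M ?B (\<lambda>\<omega>. \<lambda>j\<in>UNIV. xs j \<omega>) = ?P"
  proof -
    have "distr M ?B (\<lambda>\<omega>. \<lambda>j\<in>UNIV. xs j \<omega>) = PiM UNIV (\<lambda>j. distr M borel (xs j))"
      using indep_vars_iff_distr_eq_PiM[where I=UNIV and X=xs and M'="\<lambda>_. borel"] indep by simp
    also have "\<dots> = ?P" by (simp add: ident)
    finally show ?thesis .
  qed
  have tr: "(\<integral>\<^sup>+\<omega>. G (\<lambda>j. xs j \<omega>) \<partial>M) = (\<integral>\<^sup>+y. G y \<partial>?P)" if G: "G \<in> borel_measurable ?B" for G
  proof -
    have "(\<integral>\<^sup>+y. G y \<partial>?P) = (\<integral>\<^sup>+y. G y \<partial>distr M ?B (\<lambda>\<omega>. \<lambda>j\<in>UNIV. xs j \<omega>))"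
      by (simp add: D)
    also have "\<dots> = (\<integral>\<^sup>+\<omega>. G (\<lambda>j\<in>UNIV. xs j \<omega>) \<partial>M)"
      by (rule nn_integral_distr[OF Ym]) (simp add: G)
    also have "\<dots> = (\<integral>\<^sup>+\<omega>. G (\<lambda>j. xs j \<omega>) \<partial>M)"
      by (simp add: restrict_def)
    finally show ?thesis by simp
  qed
  have Oj: "(\<lambda>y::'n \<Rightarrow> real^'p. outer_prod (y j)) \<in> borel_measurable ?B" for j
  proof -
    have "(\<lambda>y::'n \<Rightarrow> real^'p. y j) \<in> measurable ?B borel"
      by (rule measurable_component_singleton) simp
    from measurable_compose[OF this outer_meas] show ?thesis .
  qed
  have Om: "(\<lambda>y::'n \<Rightarrow> real^'p. \<chi> j. outer_prod (y j)) \<in> borel_measurable ?B"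
    by (intro bm_vec_lambda Oj)
  have Yi: "(\<lambda>y::'n \<Rightarrow> real^'p. y i) \<in> borel_measurable ?B"
    by (rule measurable_component_singleton) simp
  define G1 where "G1 = (\<lambda>y::'n \<Rightarrow> real^'p. ennreal (deriv g (y i \<bullet> \<beta>)) * \<Phi> (\<chi> j. outer_prod (y j)))"
  define G2 where "G2 = (\<lambda>y::'n \<Rightarrow> real^'p. ennreal \<delta> * \<Phi> (\<chi> j. outer_prod (y j)))"
  have G1m: "G1 \<in> borel_measurable ?B"
    unfolding G1_def
    by (intro borel_measurable_times_ennreal measurable_compose[OF measurable_compose[OF Yi dg_meas] measurable_ennreal]
        measurable_compose[OF Om Phi])
  have G2m: "G2 \<in> borel_measurable ?B"
    unfolding G2_def
    by (intro borel_measurable_times_ennreal measurable_const measurable_compose[OF Om Phi]) simp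
  interpret P: product_sigma_finite "\<lambda>_::'n. ?mu"
    unfolding product_sigma_finite_def using mu.sigma_finite_measure_axioms by simp
  have U: "(UNIV::'n set) = insert i (UNIV - {i})" by auto
  have ins: "(\<integral>\<^sup>+y. G y \<partial>?P) = (\<integral>\<^sup>+z. (\<integral>\<^sup>+y. G (z(i := y)) \<partial>?mu) \<partial>PiM (UNIV - {i}) (\<lambda>_. ?mu))"
    if G: "G \<in> borel_measurable ?B" for G
  proof -
    have s: "sets (PiM (insert i (UNIV - {i})) (\<lambda>_. ?mu)) = sets ?B"
      by (rule sets_PiM_cong) auto
    have "G \<in> borel_measurable (PiM (insert i (UNIV - {i})) (\<lambda>_. ?mu))"
      using G by (subst measurable_cong_sets[OF s refl])
    from P.product_nn_integral_insert[OF _ _ this] show ?thesis by (simp add: U[symmetric])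
  qed
  have inner: "(\<integral>\<^sup>+y. G1 (z(i := y)) \<partial>?mu) = (\<integral>\<^sup>+y. G2 (z(i := y)) \<partial>?mu)" for z
  proof -
    define K where "K = (\<lambda>Z. \<Phi> (\<chi> j. if j = i then Z else outer_prod (z j)))"
    have Km: "K \<in> borel_measurable borel"
    proof -
      have "continuous_on UNIV (\<lambda>Z::real^'p^'p. (\<chi> j. if j = i then Z else outer_prod (z j)))"
        by (intro continuous_on_vec_lambda cont_if_const continuous_intros)
      then have "(\<lambda>Z::real^'p^'p. (\<chi> j. if j = i then Z else outer_prod (z j))) \<in> borel_measurable borel"
        by (rule borel_measurable_continuous_onI)
      from measurable_compose[OF this Phi] show ?thesis unfolding K_def .
    qed
    have e: "(\<chi> j. outer_prod ((z(i := y)) j)) = (\<chi> j. if j = i then outer_prod y else outer_prod (z j))" for y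
      by (simp add: vec_eq_iff)
    have "(\<integral>\<^sup>+y. G1 (z(i := y)) \<partial>?mu) = (\<integral>\<^sup>+y. ennreal (deriv g (y \<bullet> \<beta>)) * K (outer_prod y) \<partial>?mu)"
      unfolding G1_def K_def e by simp
    also have "\<dots> = ennreal \<delta> * (\<integral>\<^sup>+y. K (outer_prod y) \<partial>?mu)"
      by (rule cond_nn_mu[OF Km])
    also have "\<dots> = (\<integral>\<^sup>+y. ennreal \<delta> * K (outer_prod y) \<partial>?mu)"
      by (rule nn_integral_cmult[symmetric]) (use measurable_compose[OF outer_meas Km] in simp)
    also have "\<dots> = (\<integral>\<^sup>+y. G2 (z(i := y)) \<partial>?mu)"
      unfolding G2_def K_def e by simp
    finally show ?thesis .
  qed
  have "(\<integral>\<^sup>+\<omega>. ennreal (deriv g (xs i \<omega> \<bullet> \<beta>)) * \<Phi> (\<chi> j. outer_prod (xs j \<omega>)) \<partial>M)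
      = (\<integral>\<^sup>+\<omega>. G1 (\<lambda>j. xs j \<omega>) \<partial>M)" by (simp add: G1_def)
  also have "\<dots> = (\<integral>\<^sup>+y. G1 y \<partial>?P)" by (rule tr[OF G1m])
  also have "\<dots> = (\<integral>\<^sup>+y. G2 y \<partial>?P)" by (simp add: ins[OF G1m] ins[OF G2m] inner)
  also have "\<dots> = (\<integral>\<^sup>+\<omega>. G2 (\<lambda>j. xs j \<omega>) \<partial>M)" by (rule tr[OF G2m, symmetric])
  also have "\<dots> = (\<integral>\<^sup>+\<omega>. ennreal \<delta> * \<Phi> (\<chi> j. outer_prod (xs j \<omega>)) \<partial>M)" by (simp add: G2_def)
  also have "\<dots> = ennreal \<delta> * (\<integral>\<^sup>+\<omega>. \<Phi> (\<chi> j. outer_prod (xs j \<omega>)) \<partial>M)"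
  proof (rule nn_integral_cmult)
    have "(\<lambda>\<omega>. \<chi> j. outer_prod (xs j \<omega>)) \<in> borel_measurable M"
      by (intro bm_vec_lambda measurable_compose[OF xs_meas outer_meas])
    from measurable_compose[OF this Phi] show "(\<lambda>\<omega>. \<Phi> (\<chi> j. outer_prod (xs j \<omega>))) \<in> borel_measurable M" .
  qed
  finally show ?thesis .
qed

end


lemma A_eq: "transpose (design_matrix xs \<omega>) ** weight_matrix g \<beta> (design_matrix xs \<omega>) ** design_matrix xs \<omega>
   = (\<Sum>i\<in>UNIV. deriv g (xs i \<omega> \<bullet> \<beta>) *\<^sub>R outer_prod (xs i \<omega>))"
  by (simp add: vec_eq_iff matrix_matrix_mult_def transpose_def weight_matrix_def design_matrix_def
      outer_prod_def sum_component if_distrib if_distribR sum.delta' mult_ac cong: if_cong)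

lemma B_eq: "transpose (design_matrix xs \<omega>) ** design_matrix xs \<omega> = (\<Sum>i\<in>UNIV. outer_prod (xs i \<omega>))"
  by (simp add: vec_eq_iff matrix_matrix_mult_def transpose_def design_matrix_def outer_prod_def sum_component)

lemma B_eq1: "(\<Sum>i\<in>I. outer_prod (u i)) = (\<Sum>i\<in>I. 1 *\<^sub>R outer_prod (u i))"
  by simp

lemma bl_trace_l: "bounded_linear (\<lambda>Z::real^'n::finite^'n. trace (W ** Z))"
  unfolding linear_conv_bounded_linear[symmetric]
  by (rule linearI) (simp_all add: matrix_add_ldistrib trace_add trace_scale_r)

lemma bl_trace_r: "bounded_linear (\<lambda>Z::real^'n::finite^'n. trace (Z ** W))"
  unfolding linear_conv_bounded_linear[symmetric]
  by (rule linearI) (simp_all add: mm_add_r trace_add mm_scale_l trace_scale)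

lemma bl_transpose: "bounded_linear (\<lambda>Z::real^'n::finite^'n. transpose Z)"
  unfolding linear_conv_bounded_linear[symmetric]
  by (rule linearI) (simp_all add: transpose_def vec_eq_iff)

lemma sum_sq_zero:
  assumes "(\<Sum>i\<in>(UNIV::'n::finite set). c i * (u i \<bullet> v)^2) = 0" "\<And>i. c i > 0"
  shows "u i \<bullet> v = 0"
proof -
  have nn: "\<forall>i\<in>UNIV. 0 \<le> c i * (u i \<bullet> v)^2" using assms(2) by (simp add: less_imp_le)
  have "\<forall>i\<in>UNIV. c i * (u i \<bullet> v)^2 = 0"
    using assms(1) sum_nonneg_eq_0_iff[of UNIV "\<lambda>i. c i * (u i \<bullet> v)^2"] nn by simp
  then have "c i = 0 \<or> u i \<bullet> v = 0" by simp
  then show ?thesis using assms(2)[of i] by auto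
qed

lemma quad_B: "v \<bullet> ((\<Sum>i\<in>I. outer_prod (u i)) *v v) = (\<Sum>i\<in>I. (u i \<bullet> v)^2)"
  using quad_sum_outer[of v "\<lambda>_. 1" u I] by simp

lemma A_mulv: "(\<Sum>i\<in>I. c i *\<^sub>R outer_prod (u i)) *v v = (\<Sum>i\<in>I. (c i * (u i \<bullet> v)) *\<^sub>R u i)"
  by (simp add: mulv_sum smul_mulv outer_mulv)

lemma B_invertible:
  fixes u :: "'n::finite \<Rightarrow> real^'p::finite"
  assumes "invertible (\<Sum>i\<in>UNIV. c i *\<^sub>R outer_prod (u i))"
  shows "invertible (\<Sum>i\<in>UNIV. outer_prod (u i))"
proof (rule invertible_of_ker)
  fix v assume "(\<Sum>i\<in>UNIV. outer_prod (u i)) *v v = 0"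
  then have "v \<bullet> ((\<Sum>i\<in>UNIV. outer_prod (u i)) *v v) = 0" by simp
  then have "(\<Sum>i\<in>UNIV. 1 * (u i \<bullet> v)^2) = 0" unfolding quad_B by simp
  then have z: "u i \<bullet> v = 0" for i using sum_sq_zero[of "\<lambda>_. 1" u v] by simp
  have "(\<Sum>i\<in>UNIV. c i *\<^sub>R outer_prod (u i)) *v v = 0" unfolding A_mulv by (simp add: z)
  then have "(\<Sum>i\<in>UNIV. c i *\<^sub>R outer_prod (u i)) *v v = (\<Sum>i\<in>UNIV. c i *\<^sub>R outer_prod (u i)) *v 0" by simp
  from injD[OF inj_matrix_vector_mult[OF assms] this] show "v = 0" .
qed

context glm
begin

definition "Eo = (\<integral>\<omega>. outer_prod (x \<omega>) \<partial>M)"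
definition "Sm = (\<integral>\<omega>. transpose (design_matrix xs \<omega>) ** design_matrix xs \<omega> \<partial>M)"

lemma Sm_eq: "Sm = real CARD('n) *\<^sub>R Eo"
proof -
  have "Sm = (\<Sum>i\<in>UNIV. \<integral>\<omega>. outer_prod (xs i \<omega>) \<partial>M)"
    unfolding Sm_def B_eq using Bochner_Integration.integral_sum[where I=UNIV and f="\<lambda>i \<omega>. outer_prod (xs i \<omega>)"] int_outer_xs by simp
  also have "\<dots> = (\<Sum>i\<in>(UNIV::'n set). Eo)" by (simp add: integral_outer_xs Eo_def)
  also have "\<dots> = real CARD('n) *\<^sub>R Eo" by (rule sum_constant_scaleR)
  finally show ?thesis .
qed

lemma int_B: "integrable M (\<lambda>\<omega>. transpose (design_matrix xs \<omega>) ** design_matrix xs \<omega>)"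
  unfolding B_eq using Bochner_Integration.integrable_sum[where I=UNIV and f="\<lambda>i \<omega>. outer_prod (xs i \<omega>)"] int_outer_xs by simp

lemma int_A: "integrable M (\<lambda>\<omega>. transpose (design_matrix xs \<omega>) ** weight_matrix g \<beta> (design_matrix xs \<omega>) ** design_matrix xs \<omega>)"
  unfolding A_eq using Bochner_Integration.integrable_sum[where I=UNIV and f="\<lambda>i \<omega>. deriv g (xs i \<omega> \<bullet> \<beta>) *\<^sub>R outer_prod (xs i \<omega>)"] int_dout_xs by simp

lemma H_eq: "H_g M g \<beta> xs = \<delta> *\<^sub>R Sm"
proof -
  have "H_g M g \<beta> xs = (\<Sum>i\<in>UNIV. \<integral>\<omega>. deriv g (xs i \<omega> \<bullet> \<beta>) *\<^sub>R outer_prod (xs i \<omega>) \<partial>M)"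
    unfolding H_g_def Let_def A_eq using Bochner_Integration.integral_sum[where I=UNIV and f="\<lambda>i \<omega>. deriv g (xs i \<omega> \<bullet> \<beta>) *\<^sub>R outer_prod (xs i \<omega>)"] int_dout_xs by simp
  also have "\<dots> = (\<Sum>i\<in>(UNIV::'n set). \<delta> *\<^sub>R Eo)" by (simp add: integral_dout_xs Eo_def)
  also have "\<dots> = real CARD('n) *\<^sub>R (\<delta> *\<^sub>R Eo)" by (rule sum_constant_scaleR)
  finally show ?thesis unfolding Sm_eq by simp
qed

lemma SP: assumes "psd W" shows "0 \<le> trace (W ** Sm)"
proof -
  have "trace (W ** Eo) = (\<integral>\<omega>. trace (W ** outer_prod (x \<omega>)) \<partial>M)"
    unfolding Eo_def by (rule integral_bounded_linear[OF bl_trace_l int_outer, symmetric])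
  also have "\<dots> = (\<integral>\<omega>. x \<omega> \<bullet> (W *v x \<omega>) \<partial>M)" by (simp add: trace_outer)
  also have "\<dots> \<ge> 0" using assms unfolding psd_def by (intro integral_nonneg_AE) simp
  finally show ?thesis unfolding Sm_eq by (simp add: trace_scale_r)
qed

lemma Sm_sym: "transpose Sm = Sm"
proof -
  have "transpose Eo = (\<integral>\<omega>. transpose (outer_prod (x \<omega>)) \<partial>M)"
    unfolding Eo_def by (rule integral_bounded_linear[OF bl_transpose int_outer, symmetric])
  then have "transpose Eo = Eo" by (simp add: transpose_outer Eo_def)
  then show ?thesis unfolding Sm_eq by (simp add: transpose_scalar)
qed

lemma Sm_psd: "psd Sm"
  unfolding psd_def using SP[OF psd_outer] trace_outer' by metis

lemma Sm_inv:
  assumes AEinv: "AE \<omega> in M. invertible (transpose (design_matrix xs \<omega>) **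
                 weight_matrix g \<beta> (design_matrix xs \<omega>) ** design_matrix xs \<omega>)"
  shows "invertible Sm"
proof (rule invertible_of_ker)
  fix v assume Sv: "Sm *v v = 0"
  let ?q = "\<lambda>\<omega>. v \<bullet> ((transpose (design_matrix xs \<omega>) ** design_matrix xs \<omega>) *v v)"
  have "trace (outer_prod v ** Sm) = (\<integral>\<omega>. trace (outer_prod v ** (transpose (design_matrix xs \<omega>) ** design_matrix xs \<omega>)) \<partial>M)"
    unfolding Sm_def by (rule integral_bounded_linear[OF bl_trace_l int_B, symmetric])
  also have "\<dots> = integral\<^sup>L M ?q" by (simp add: trace_outer')
  finally have "integral\<^sup>L M ?q = 0" using Sv by (simp add: trace_outer')
  moreover have iq: "integrable M ?q"
    using integrable_bounded_linear[OF bl_trace_l int_B, of "outer_prod v"] by (simp add: trace_outer')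
  moreover have q0: "AE \<omega> in M. 0 \<le> ?q \<omega>"
    unfolding B_eq quad_B by (simp add: sum_nonneg)
  ultimately have "AE \<omega> in M. ?q \<omega> = 0" using integral_nonneg_eq_0_iff_AE by blast
  then have "AE \<omega> in M. v = 0" using AEinv
  proof eventually_elim
    case (elim \<omega>)
    have "(\<Sum>i\<in>UNIV. 1 * (xs i \<omega> \<bullet> v)^2) = 0"
      using elim(1) unfolding B_eq quad_B by simp
    then have z: "xs i \<omega> \<bullet> v = 0" for i using sum_sq_zero[of "\<lambda>_. 1" "\<lambda>i. xs i \<omega>" v] by simp
    let ?A = "\<Sum>i\<in>UNIV. deriv g (xs i \<omega> \<bullet> \<beta>) *\<^sub>R outer_prod (xs i \<omega>)"
    have "?A *v v = 0" unfolding A_mulv by (simp add: z)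
    moreover have "invertible ?A" using elim(2) unfolding A_eq .
    ultimately show "v = 0" using injD[OF inj_matrix_vector_mult, of ?A v 0] by simp
  qed
  then show "v = 0" by simp
qed

end


context glm
begin

definition "dd i \<omega> = deriv g (xs i \<omega> \<bullet> \<beta>)"
definition "Am \<omega> = (\<Sum>i\<in>UNIV. dd i \<omega> *\<^sub>R outer_prod (xs i \<omega>))"
definition "Bm \<omega> = (\<Sum>i\<in>UNIV. outer_prod (xs i \<omega>))"
definition "T1 \<omega> = trace (matrix_inv (Am \<omega>) ** Bm \<omega> ** matrix_inv (Am \<omega>) ** Sm)"
definition "T3 \<omega> = trace (matrix_inv (Bm \<omega>) ** Sm)"
definition "hh i \<omega> = trace (matrix_inv (Bm \<omega>) ** Sm ** matrix_inv (Bm \<omega>) ** outer_prod (xs i \<omega>))"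
definition "T2 \<omega> = (\<Sum>i\<in>UNIV. dd i \<omega> * hh i \<omega>)"

lemma dd_meas[measurable]: "dd i \<in> borel_measurable M"
  unfolding dd_def[abs_def] using measurable_compose[OF xs_meas dg_meas] .

lemma oxs_meas[measurable]: "(\<lambda>\<omega>. outer_prod (xs i \<omega>)) \<in> borel_measurable M"
  using measurable_compose[OF xs_meas outer_meas] .

lemma Am_meas: "Am \<in> borel_measurable M"
  unfolding Am_def[abs_def]
  by (intro borel_measurable_sum borel_measurable_scaleR dd_meas oxs_meas)

lemma Bm_meas: "Bm \<in> borel_measurable M"
  unfolding Bm_def[abs_def]
  by (intro borel_measurable_sum oxs_meas)

lemma T3_meas[measurable]: "T3 \<in> borel_measurable M"
  unfolding T3_def[abs_def]
  by (intro bm_trace bm_mmult bm_matrix_inv' Bm_meas measurable_const) simp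

lemma hh_meas[measurable]: "hh i \<in> borel_measurable M"
  unfolding hh_def[abs_def]
  by (intro bm_trace bm_mmult bm_matrix_inv' Bm_meas measurable_const oxs_meas) simp

lemma T2_meas[measurable]: "T2 \<in> borel_measurable M"
  unfolding T2_def[abs_def]
  by (intro borel_measurable_sum borel_measurable_times dd_meas hh_meas)

lemma dd_nonneg: "0 \<le> dd i \<omega>" unfolding dd_def by (rule dg_nonneg)

lemma Am_sym: "transpose (Am \<omega>) = Am \<omega>" unfolding Am_def by (rule sym_sum_outer)
lemma Bm_sym: "transpose (Bm \<omega>) = Bm \<omega>" unfolding Bm_def using sym_sum_outer[of "\<lambda>_. 1"] by simp
lemma Am_psd: "psd (Am \<omega>)" unfolding Am_def by (intro psd_sum_outer dd_nonneg)
lemma Bm_psd: "psd (Bm \<omega>)" unfolding Bm_def using psd_sum_outer[of UNIV "\<lambda>_. 1"] by simp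

lemma pointwise:
  assumes iS: "invertible Sm" and iA: "invertible (Am \<omega>)"
  shows "invertible (Bm \<omega>)" and "0 \<le> hh i \<omega>" and "T3 \<omega> = (\<Sum>i\<in>UNIV. hh i \<omega>)"
    and "3*(1/\<delta>)^2 * T3 \<omega> \<le> T1 \<omega> + 2*(1/\<delta>)^3 * T2 \<omega>"
    and "0 \<le> T1 \<omega>"
    and "2 * real CARD('p) \<le> T3 \<omega> + trace (matrix_inv Sm ** Bm \<omega>)"
proof -
  show iB: "invertible (Bm \<omega>)" using iA unfolding Am_def Bm_def by (rule B_invertible)
  define b where "b = matrix_inv (Bm \<omega>)"
  have sb: "transpose b = b" unfolding b_def by (rule matrix_inv_sym[OF iB Bm_sym])
  have bB: "b ** Bm \<omega> = mat 1" unfolding b_def by (rule matrix_inv_left[OF iB])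
  have pW: "psd (b ** Sm ** b)" by (rule psd_sandwich[OF sb Sm_psd])
  show "0 \<le> hh i \<omega>" using pW unfolding hh_def b_def[symmetric] trace_outer psd_def by simp
  have "b ** Sm ** b ** Bm \<omega> = b ** Sm" by (metis bB matrix_mul_assoc matrix_mul_rid)
  then have "T3 \<omega> = trace (b ** Sm ** b ** Bm \<omega>)" unfolding T3_def b_def by simp
  also have "\<dots> = (\<Sum>i\<in>UNIV. hh i \<omega>)" unfolding Bm_def trace_sum_r hh_def b_def ..
  finally show "T3 \<omega> = (\<Sum>i\<in>UNIV. hh i \<omega>)" .
  have "T2 \<omega> = trace (b ** Sm ** b ** Am \<omega>)"
    unfolding T2_def Am_def trace_sum_r trace_scale_r hh_def b_def ..
  also have "\<dots> = trace ((b ** Sm) ** (b ** Am \<omega>))" by (simp add: matrix_mul_assoc)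
  also have "\<dots> = trace ((b ** Am \<omega>) ** (b ** Sm))" by (rule trace_mul_sym)
  also have "\<dots> = trace (b ** Am \<omega> ** b ** Sm)" by (simp add: matrix_mul_assoc)
  finally have T2e: "T2 \<omega> = trace (matrix_inv (Bm \<omega>) ** Am \<omega> ** matrix_inv (Bm \<omega>) ** Sm)" unfolding b_def .
  have "3*(1/\<delta>)^2 * trace (matrix_inv (Bm \<omega>) ** Sm) \<le>
         trace (matrix_inv (Am \<omega>) ** Bm \<omega> ** matrix_inv (Am \<omega>) ** Sm) + 2*(1/\<delta>)^3 * trace (matrix_inv (Bm \<omega>) ** Am \<omega> ** matrix_inv (Bm \<omega>) ** Sm)"
    by (rule main_alg[OF SP iA iB Am_sym Bm_sym Am_psd Bm_psd]) (use delta_pos in auto)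
  then show "3*(1/\<delta>)^2 * T3 \<omega> \<le> T1 \<omega> + 2*(1/\<delta>)^3 * T2 \<omega>"
    unfolding T2e T1_def T3_def .
  have sa: "transpose (matrix_inv (Am \<omega>)) = matrix_inv (Am \<omega>)" by (rule matrix_inv_sym[OF iA Am_sym])
  show "0 \<le> T1 \<omega>" unfolding T1_def by (rule SP[OF psd_sandwich[OF sa Bm_psd]])
  show "2 * real CARD('p) \<le> T3 \<omega> + trace (matrix_inv Sm ** Bm \<omega>)"
    unfolding T3_def by (rule second_alg[OF SP iS iB Sm_sym Bm_sym Bm_psd])
qed

end


context glm
begin

definition "phi K \<omega> = (if T3 \<omega> \<le> real K then 1 else (0::real))"

lemma phi_meas[measurable]: "phi K \<in> borel_measurable M"
  unfolding phi_def[abs_def] by measurable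

lemma phi01: "phi K \<omega> = 0 \<or> phi K \<omega> = 1" unfolding phi_def by auto
lemma phi_nonneg: "0 \<le> phi K \<omega>" unfolding phi_def by auto

lemma key_sum:
  assumes iS: "invertible Sm" and AEinv: "AE \<omega> in M. invertible (Am \<omega>)"
  shows "(\<integral>\<^sup>+\<omega>. ennreal (phi K \<omega> * T2 \<omega>) \<partial>M) = ennreal \<delta> * (\<integral>\<^sup>+\<omega>. ennreal (phi K \<omega> * T3 \<omega>) \<partial>M)"
proof -
  have sumZ: "(\<lambda>Zs::real^'p^'p^'n. \<Sum>j\<in>UNIV. Zs$j) \<in> borel_measurable borel"
    by (intro borel_measurable_sum bm_vec_nth measurable_ident_sets) simp
  have invZ: "(\<lambda>Zs::real^'p^'p^'n. matrix_inv (\<Sum>j\<in>UNIV. Zs$j)) \<in> borel_measurable borel"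
    by (rule bm_matrix_inv'[OF sumZ])
  have trZ[measurable]: "(\<lambda>Zs::real^'p^'p^'n. trace (matrix_inv (\<Sum>j\<in>UNIV. Zs$j) ** Sm)) \<in> borel_measurable borel"
    by (intro bm_trace bm_mmult invZ measurable_const) simp
  have hZ[measurable]: "(\<lambda>Zs::real^'p^'p^'n. trace (matrix_inv (\<Sum>j\<in>UNIV. Zs$j) ** Sm ** matrix_inv (\<Sum>j\<in>UNIV. Zs$j) ** Zs$i)) \<in> borel_measurable borel" for i
    by (intro bm_trace bm_mmult invZ measurable_const bm_vec_nth measurable_ident_sets) simp_all
  have E: "(\<integral>\<^sup>+\<omega>. ennreal (dd i \<omega>) * ennreal (phi K \<omega> * hh i \<omega>) \<partial>M) = ennreal \<delta> * (\<integral>\<^sup>+\<omega>. ennreal (phi K \<omega> * hh i \<omega>) \<partial>M)" for i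
  proof -
    define \<Phi> where "\<Phi> = (\<lambda>Zs::real^'p^'p^'n. ennreal ((if trace (matrix_inv (\<Sum>j\<in>UNIV. Zs$j) ** Sm) \<le> real K then 1 else 0) *
          trace (matrix_inv (\<Sum>j\<in>UNIV. Zs$j) ** Sm ** matrix_inv (\<Sum>j\<in>UNIV. Zs$j) ** Zs$i)))"
    have Pm: "\<Phi> \<in> borel_measurable borel" unfolding \<Phi>_def by measurable
    have ev: "\<Phi> (\<chi> j. outer_prod (xs j \<omega>)) = ennreal (phi K \<omega> * hh i \<omega>)" for \<omega>
      unfolding \<Phi>_def phi_def T3_def hh_def Bm_def by simp
    show ?thesis using key[OF Pm, of i] unfolding ev dd_def .
  qed
  have m1: "(\<lambda>\<omega>. ennreal (dd i \<omega>) * ennreal (phi K \<omega> * hh i \<omega>)) \<in> borel_measurable M" for i by measurable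
  have m2: "(\<lambda>\<omega>. ennreal (phi K \<omega> * hh i \<omega>)) \<in> borel_measurable M" for i by measurable
  have "(\<integral>\<^sup>+\<omega>. ennreal (phi K \<omega> * T2 \<omega>) \<partial>M) = (\<integral>\<^sup>+\<omega>. (\<Sum>i\<in>UNIV. ennreal (dd i \<omega>) * ennreal (phi K \<omega> * hh i \<omega>)) \<partial>M)"
  proof (rule nn_integral_cong_AE)
    show "AE \<omega> in M. ennreal (phi K \<omega> * T2 \<omega>) = (\<Sum>i\<in>UNIV. ennreal (dd i \<omega>) * ennreal (phi K \<omega> * hh i \<omega>))"
      using AEinv
    proof eventually_elim
      case (elim \<omega>)
      have h0: "0 \<le> hh i \<omega>" for i by (rule pointwise(2)[OF iS elim])
      have "(\<Sum>i\<in>UNIV. ennreal (dd i \<omega>) * ennreal (phi K \<omega> * hh i \<omega>)) = (\<Sum>i\<in>UNIV. ennreal (dd i \<omega> * (phi K \<omega> * hh i \<omega>)))"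
        by (intro sum.cong refl ennreal_mult[symmetric] dd_nonneg mult_nonneg_nonneg phi_nonneg h0)
      also have "\<dots> = ennreal (\<Sum>i\<in>UNIV. dd i \<omega> * (phi K \<omega> * hh i \<omega>))"
        by (intro sum_ennreal mult_nonneg_nonneg dd_nonneg phi_nonneg h0)
      also have "(\<Sum>i\<in>UNIV. dd i \<omega> * (phi K \<omega> * hh i \<omega>)) = phi K \<omega> * T2 \<omega>"
        unfolding T2_def by (simp add: sum_distrib_left mult_ac)
      finally show ?case by simp
    qed
  qed
  also have "\<dots> = (\<Sum>i\<in>UNIV. \<integral>\<^sup>+\<omega>. ennreal (dd i \<omega>) * ennreal (phi K \<omega> * hh i \<omega>) \<partial>M)"
    by (rule nn_integral_sum) (rule m1)
  also have "\<dots> = (\<Sum>i\<in>UNIV. ennreal \<delta> * (\<integral>\<^sup>+\<omega>. ennreal (phi K \<omega> * hh i \<omega>) \<partial>M))"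
    by (simp add: E)
  also have "\<dots> = ennreal \<delta> * (\<Sum>i\<in>UNIV. \<integral>\<^sup>+\<omega>. ennreal (phi K \<omega> * hh i \<omega>) \<partial>M)"
    by (simp add: sum_distrib_left)
  also have "(\<Sum>i\<in>UNIV. \<integral>\<^sup>+\<omega>. ennreal (phi K \<omega> * hh i \<omega>) \<partial>M) = (\<integral>\<^sup>+\<omega>. (\<Sum>i\<in>UNIV. ennreal (phi K \<omega> * hh i \<omega>)) \<partial>M)"
    by (rule nn_integral_sum[symmetric]) (rule m2)
  also have "\<dots> = (\<integral>\<^sup>+\<omega>. ennreal (phi K \<omega> * T3 \<omega>) \<partial>M)"
  proof (rule nn_integral_cong_AE)
    show "AE \<omega> in M. (\<Sum>i\<in>UNIV. ennreal (phi K \<omega> * hh i \<omega>)) = ennreal (phi K \<omega> * T3 \<omega>)"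
      using AEinv
    proof eventually_elim
      case (elim \<omega>)
      have h0: "0 \<le> hh i \<omega>" for i by (rule pointwise(2)[OF iS elim])
      have "(\<Sum>i\<in>UNIV. ennreal (phi K \<omega> * hh i \<omega>)) = ennreal (\<Sum>i\<in>UNIV. phi K \<omega> * hh i \<omega>)"
        by (intro sum_ennreal mult_nonneg_nonneg phi_nonneg h0)
      also have "(\<Sum>i\<in>UNIV. phi K \<omega> * hh i \<omega>) = phi K \<omega> * T3 \<omega>"
        unfolding pointwise(3)[OF iS elim] by (simp add: sum_distrib_left)
      finally show ?case .
    qed
  qed
  finally show ?thesis .
qed

end


context glm
begin

lemma T3_nonneg: "invertible Sm \<Longrightarrow> invertible (Am \<omega>) \<Longrightarrow> 0 \<le> T3 \<omega>"
  using pointwise(2,3) by (simp add: sum_nonneg)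

lemma T2_nonneg: "invertible Sm \<Longrightarrow> invertible (Am \<omega>) \<Longrightarrow> 0 \<le> T2 \<omega>"
  unfolding T2_def using pointwise(2) dd_nonneg by (simp add: sum_nonneg)

lemma bound_K:
  assumes iS: "invertible Sm" and AEinv: "AE \<omega> in M. invertible (Am \<omega>)"
    and iT1: "integrable M T1"
  shows "integrable M (\<lambda>\<omega>. phi K \<omega> * T3 \<omega>)" and "(\<integral>\<omega>. phi K \<omega> * T3 \<omega> \<partial>M) \<le> \<delta>^2 * (\<integral>\<omega>. T1 \<omega> \<partial>M)"
proof -
  let ?Q3 = "\<lambda>\<omega>. phi K \<omega> * T3 \<omega>" and ?Q2 = "\<lambda>\<omega>. phi K \<omega> * T2 \<omega>"
  have Q3m: "?Q3 \<in> borel_measurable M" by measurable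
  have Q2m: "?Q2 \<in> borel_measurable M" by measurable
  have Q3nn: "AE \<omega> in M. 0 \<le> ?Q3 \<omega>"
    using AEinv by eventually_elim (intro mult_nonneg_nonneg phi_nonneg T3_nonneg[OF iS])
  have Q2nn: "AE \<omega> in M. 0 \<le> ?Q2 \<omega>"
    using AEinv by eventually_elim (intro mult_nonneg_nonneg phi_nonneg T2_nonneg[OF iS])
  have "(\<integral>\<^sup>+\<omega>. ennreal (?Q3 \<omega>) \<partial>M) \<le> (\<integral>\<^sup>+\<omega>. ennreal (real K) \<partial>M)"
  proof (rule nn_integral_mono_AE)
    show "AE \<omega> in M. ennreal (?Q3 \<omega>) \<le> ennreal (real K)"
    proof (rule AE_I2)
      fix \<omega> show "ennreal (?Q3 \<omega>) \<le> ennreal (real K)"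
        unfolding phi_def by (auto intro: ennreal_leI)
    qed
  qed
  also have "\<dots> = ennreal (real K)" by (simp add: emeasure_space_1)
  finally have f3: "(\<integral>\<^sup>+\<omega>. ennreal (?Q3 \<omega>) \<partial>M) < \<infinity>" using le_less_trans by fastforce
  show iQ3: "integrable M ?Q3" by (rule integrableI_nonneg[OF Q3m Q3nn f3])
  have ks: "(\<integral>\<^sup>+\<omega>. ennreal (?Q2 \<omega>) \<partial>M) = ennreal \<delta> * (\<integral>\<^sup>+\<omega>. ennreal (?Q3 \<omega>) \<partial>M)"
    by (rule key_sum[OF iS AEinv])
  have f2: "(\<integral>\<^sup>+\<omega>. ennreal (?Q2 \<omega>) \<partial>M) < \<infinity>"
    unfolding ks using f3 by (simp add: ennreal_mult_less_top)
  have iQ2: "integrable M ?Q2" by (rule integrableI_nonneg[OF Q2m Q2nn f2])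
  have e3: "(\<integral>\<^sup>+\<omega>. ennreal (?Q3 \<omega>) \<partial>M) = ennreal (\<integral>\<omega>. ?Q3 \<omega> \<partial>M)"
    by (rule nn_integral_eq_integral[OF iQ3 Q3nn])
  have e2: "(\<integral>\<^sup>+\<omega>. ennreal (?Q2 \<omega>) \<partial>M) = ennreal (\<integral>\<omega>. ?Q2 \<omega> \<partial>M)"
    by (rule nn_integral_eq_integral[OF iQ2 Q2nn])
  have i3nn: "0 \<le> (\<integral>\<omega>. ?Q3 \<omega> \<partial>M)" by (rule integral_nonneg_AE[OF Q3nn])
  have i2nn: "0 \<le> (\<integral>\<omega>. ?Q2 \<omega> \<partial>M)" by (rule integral_nonneg_AE[OF Q2nn])
  have I2: "(\<integral>\<omega>. ?Q2 \<omega> \<partial>M) = \<delta> * (\<integral>\<omega>. ?Q3 \<omega> \<partial>M)"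
  proof -
    have "ennreal (\<integral>\<omega>. ?Q2 \<omega> \<partial>M) = ennreal (\<delta> * (\<integral>\<omega>. ?Q3 \<omega> \<partial>M))"
      using ks unfolding e2 e3 using delta_pos i3nn by (simp add: ennreal_mult)
    then show ?thesis using i2nn i3nn delta_pos by simp
  qed
  define c where "c = 1/\<delta>"
  have ineq: "AE \<omega> in M. 3*c^2 * ?Q3 \<omega> - 2*c^3 * ?Q2 \<omega> \<le> T1 \<omega>"
    using AEinv
  proof eventually_elim
    case (elim \<omega>)
    have a: "3*c^2 * T3 \<omega> \<le> T1 \<omega> + 2*c^3 * T2 \<omega>" unfolding c_def by (rule pointwise(4)[OF iS elim])
    have b: "0 \<le> T1 \<omega>" by (rule pointwise(5)[OF iS elim])
    show ?case using phi01[of K \<omega>] a b by auto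
  qed
  have "(\<integral>\<omega>. 3*c^2 * ?Q3 \<omega> - 2*c^3 * ?Q2 \<omega> \<partial>M) \<le> (\<integral>\<omega>. T1 \<omega> \<partial>M)"
    by (rule integral_mono_AE[OF _ iT1 ineq]) (intro Bochner_Integration.integrable_diff integrable_mult_right iQ3 iQ2)
  also have "(\<integral>\<omega>. 3*c^2 * ?Q3 \<omega> - 2*c^3 * ?Q2 \<omega> \<partial>M) = 3*c^2 * (\<integral>\<omega>. ?Q3 \<omega> \<partial>M) - 2*c^3 * (\<integral>\<omega>. ?Q2 \<omega> \<partial>M)"
    using iQ3 iQ2 by simp
  finally have "3*c^2 * (\<integral>\<omega>. ?Q3 \<omega> \<partial>M) - 2*c^3 * (\<delta> * (\<integral>\<omega>. ?Q3 \<omega> \<partial>M)) \<le> (\<integral>\<omega>. T1 \<omega> \<partial>M)"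
    unfolding I2 .
  moreover have "3*c^2 * X - 2*c^3 * (\<delta> * X) = X / \<delta>^2" for X
    unfolding c_def using delta_pos by (simp add: field_simps power2_eq_square power3_eq_cube)
  ultimately have "(\<integral>\<omega>. ?Q3 \<omega> \<partial>M) / \<delta>^2 \<le> (\<integral>\<omega>. T1 \<omega> \<partial>M)" by simp
  then show "(\<integral>\<omega>. ?Q3 \<omega> \<partial>M) \<le> \<delta>^2 * (\<integral>\<omega>. T1 \<omega> \<partial>M)"
    using delta_pos by (simp add: field_simps)
qed

lemma bound_int:
  assumes iS: "invertible Sm" and AEinv: "AE \<omega> in M. invertible (Am \<omega>)"
    and iT1: "integrable M T1"
  shows "real CARD('p) \<le> \<delta>^2 * (\<integral>\<omega>. T1 \<omega> \<partial>M)"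
proof -
  define f where "f = (\<lambda>K \<omega>. ennreal (phi K \<omega> * T3 \<omega>))"
  have inc: "incseq f"
  proof (rule incseq_SucI, rule le_funI)
    fix K \<omega>
    show "f K \<omega> \<le> f (Suc K) \<omega>" unfolding f_def phi_def by auto
  qed
  have fm: "f K \<in> borel_measurable M" for K unfolding f_def by measurable
  have sup: "(SUP K. f K \<omega>) = ennreal (T3 \<omega>)" for \<omega>
  proof (rule antisym)
    show "(SUP K. f K \<omega>) \<le> ennreal (T3 \<omega>)"
      by (rule SUP_least) (auto simp: f_def phi_def)
    have "T3 \<omega> \<le> real (nat \<lceil>T3 \<omega>\<rceil>)" by (rule real_nat_ceiling_ge)
    then have "f (nat \<lceil>T3 \<omega>\<rceil>) \<omega> = ennreal (T3 \<omega>)" unfolding f_def phi_def by simp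
    then show "ennreal (T3 \<omega>) \<le> (SUP K. f K \<omega>)" by (metis SUP_upper UNIV_I)
  qed
  have "AE \<omega> in M. 0 \<le> T1 \<omega>" using AEinv by eventually_elim (rule pointwise(5)[OF iS])
  then have E1nn: "0 \<le> (\<integral>\<omega>. T1 \<omega> \<partial>M)" by (rule integral_nonneg_AE)
  have "(\<integral>\<^sup>+\<omega>. ennreal (T3 \<omega>) \<partial>M) = (\<integral>\<^sup>+\<omega>. (SUP K. f K \<omega>) \<partial>M)" by (simp add: sup)
  also have "\<dots> = (SUP K. integral\<^sup>N M (f K))" by (rule nn_integral_monotone_convergence_SUP[OF inc fm])
  also have "\<dots> \<le> ennreal (\<delta>^2 * (\<integral>\<omega>. T1 \<omega> \<partial>M))"
  proof (rule SUP_least)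
    fix K
    have Q3nn: "AE \<omega> in M. 0 \<le> phi K \<omega> * T3 \<omega>"
      using AEinv by eventually_elim (intro mult_nonneg_nonneg phi_nonneg T3_nonneg[OF iS])
    have "integral\<^sup>N M (f K) = ennreal (\<integral>\<omega>. phi K \<omega> * T3 \<omega> \<partial>M)"
      unfolding f_def by (rule nn_integral_eq_integral[OF bound_K(1)[OF iS AEinv iT1] Q3nn])
    also have "\<dots> \<le> ennreal (\<delta>^2 * (\<integral>\<omega>. T1 \<omega> \<partial>M))"
      by (rule ennreal_leI[OF bound_K(2)[OF iS AEinv iT1]])
    finally show "integral\<^sup>N M (f K) \<le> ennreal (\<delta>^2 * (\<integral>\<omega>. T1 \<omega> \<partial>M))" .
  qed
  finally have nn3: "(\<integral>\<^sup>+\<omega>. ennreal (T3 \<omega>) \<partial>M) \<le> ennreal (\<delta>^2 * (\<integral>\<omega>. T1 \<omega> \<partial>M))" .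
  have T3nn: "AE \<omega> in M. 0 \<le> T3 \<omega>"
    using AEinv by eventually_elim (rule T3_nonneg[OF iS])
  have iT3: "integrable M T3"
    by (rule integrableI_nonneg[OF T3_meas T3nn]) (use nn3 in \<open>auto simp: top_unique less_top[symmetric] intro: le_less_trans\<close>)
  have "ennreal (\<integral>\<omega>. T3 \<omega> \<partial>M) \<le> ennreal (\<delta>^2 * (\<integral>\<omega>. T1 \<omega> \<partial>M))"
    using nn3 unfolding nn_integral_eq_integral[OF iT3 T3nn] .
  then have up: "(\<integral>\<omega>. T3 \<omega> \<partial>M) \<le> \<delta>^2 * (\<integral>\<omega>. T1 \<omega> \<partial>M)"
    using E1nn by (simp add: ennreal_le_iff)
  have iTr: "integrable M (\<lambda>\<omega>. trace (matrix_inv Sm ** Bm \<omega>))"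
    using integrable_bounded_linear[OF bl_trace_l int_B, of "matrix_inv Sm"] unfolding B_eq Bm_def .
  have itr: "(\<integral>\<omega>. trace (matrix_inv Sm ** Bm \<omega>) \<partial>M) = real CARD('p)"
  proof -
    have "(\<integral>\<omega>. trace (matrix_inv Sm ** Bm \<omega>) \<partial>M) = trace (matrix_inv Sm ** Sm)"
      unfolding Sm_def Bm_def B_eq[symmetric] by (rule integral_bounded_linear[OF bl_trace_l int_B])
    also have "\<dots> = real CARD('p)" by (simp add: matrix_inv_left[OF iS] trace_I)
    finally show ?thesis .
  qed
  have "(\<integral>\<omega>. 2 * real CARD('p) \<partial>M) \<le> (\<integral>\<omega>. T3 \<omega> + trace (matrix_inv Sm ** Bm \<omega>) \<partial>M)"
  proof (rule integral_mono_AE)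
    show "integrable M (\<lambda>\<omega>. 2 * real CARD('p))" by simp
    show "integrable M (\<lambda>\<omega>. T3 \<omega> + trace (matrix_inv Sm ** Bm \<omega>))" using iT3 iTr by simp
    show "AE \<omega> in M. 2 * real CARD('p) \<le> T3 \<omega> + trace (matrix_inv Sm ** Bm \<omega>)"
      using AEinv by eventually_elim (rule pointwise(6)[OF iS])
  qed
  then have "2 * real CARD('p) \<le> (\<integral>\<omega>. T3 \<omega> \<partial>M) + real CARD('p)"
    using iT3 iTr itr by (simp add: prob_space)
  then show ?thesis using up by simp
qed

end


context glm
begin

lemma final:
  assumes AEinv: "AE \<omega> in M. invertible (transpose (design_matrix xs \<omega>) **
                 weight_matrix g \<beta> (design_matrix xs \<omega>) ** design_matrix xs \<omega>)"
    and intF: "integrable M (\<lambda>\<omega>. let X = design_matrix xs \<omega>;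
                 A = transpose X ** weight_matrix g \<beta> X ** X in
               matrix_inv A ** (transpose X ** X) ** matrix_inv A)"
  shows "v_u M g \<beta> xs < v_l M g \<beta> xs"
proof -
  have AmE: "transpose (design_matrix xs \<omega>) ** weight_matrix g \<beta> (design_matrix xs \<omega>) ** design_matrix xs \<omega> = Am \<omega>" for \<omega>
    by (simp add: A_eq Am_def dd_def)
  have BmE: "transpose (design_matrix xs \<omega>) ** design_matrix xs \<omega> = Bm \<omega>" for \<omega>
    by (simp add: B_eq Bm_def)
  have iS: "invertible Sm" by (rule Sm_inv[OF AEinv])
  have AEinv': "AE \<omega> in M. invertible (Am \<omega>)" using AEinv unfolding AmE .
  have Fform: "(\<lambda>\<omega>. let X = design_matrix xs \<omega>;
                 A = transpose X ** weight_matrix g \<beta> X ** X in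
               matrix_inv A ** (transpose X ** X) ** matrix_inv A) = (\<lambda>\<omega>. matrix_inv (Am \<omega>) ** Bm \<omega> ** matrix_inv (Am \<omega>))"
    by (simp only: Let_def AmE BmE)
  have iF: "integrable M (\<lambda>\<omega>. matrix_inv (Am \<omega>) ** Bm \<omega> ** matrix_inv (Am \<omega>))"
    using intF unfolding Fform .
  have T1e: "T1 = (\<lambda>\<omega>. trace ((matrix_inv (Am \<omega>) ** Bm \<omega> ** matrix_inv (Am \<omega>)) ** Sm))"
    unfolding T1_def[abs_def] ..
  have iT1: "integrable M T1" unfolding T1e by (rule integrable_bounded_linear[OF bl_trace_r iF])
  have vl: "v_l M g \<beta> xs = \<delta> * (\<integral>\<omega>. T1 \<omega> \<partial>M)"
  proof -
    have "v_l M g \<beta> xs = trace ((\<integral>\<omega>. matrix_inv (Am \<omega>) ** Bm \<omega> ** matrix_inv (Am \<omega>) \<partial>M) ** (\<delta> *\<^sub>R Sm))"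
      unfolding v_l_def Fform H_eq ..
    also have "\<dots> = \<delta> * trace ((\<integral>\<omega>. matrix_inv (Am \<omega>) ** Bm \<omega> ** matrix_inv (Am \<omega>) \<partial>M) ** Sm)"
      by (simp add: mm_scale_r trace_scale)
    also have "trace ((\<integral>\<omega>. matrix_inv (Am \<omega>) ** Bm \<omega> ** matrix_inv (Am \<omega>) \<partial>M) ** Sm) = (\<integral>\<omega>. T1 \<omega> \<partial>M)"
      unfolding T1e by (rule integral_bounded_linear[OF bl_trace_r iF, symmetric])
    finally show ?thesis .
  qed
  have Sme: "(\<integral>\<omega>. (let X = design_matrix xs \<omega> in transpose X ** X) \<partial>M) = Sm"
    unfolding Sm_def Let_def ..
  have vu: "v_u M g \<beta> xs = (real CARD('n) - 1) / real CARD('n) * (real CARD('p) / \<delta>)"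
  proof -
    have "v_u M g \<beta> xs = (real CARD('n) - 1) / real CARD('n) * trace (matrix_inv (\<delta> *\<^sub>R Sm) ** Sm)"
      unfolding v_u_def Sme H_eq ..
    also have "matrix_inv (\<delta> *\<^sub>R Sm) = (1/\<delta>) *\<^sub>R matrix_inv Sm"
      using matrix_inv_scale[OF iS] delta_pos by simp
    also have "trace (((1/\<delta>) *\<^sub>R matrix_inv Sm) ** Sm) = real CARD('p) / \<delta>"
      by (simp add: mm_scale_l trace_scale matrix_inv_left[OF iS] trace_I)
    finally show ?thesis .
  qed
  have b: "real CARD('p) \<le> \<delta>^2 * (\<integral>\<omega>. T1 \<omega> \<partial>M)" by (rule bound_int[OF iS AEinv' iT1])
  have "real CARD('p) / \<delta> \<le> \<delta> * (\<integral>\<omega>. T1 \<omega> \<partial>M)"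
    using b delta_pos by (simp add: field_simps power2_eq_square)
  moreover have "(real CARD('n) - 1) / real CARD('n) * (real CARD('p) / \<delta>) < real CARD('p) / \<delta>"
  proof -
    have p: "0 < real CARD('p) / \<delta>" using delta_pos by simp
    have "(real CARD('n) - 1) / real CARD('n) < 1" by (simp add: field_simps)
    from mult_strict_right_mono[OF this p] show ?thesis by simp
  qed
  ultimately show ?thesis unfolding vl vu by linarith
qed

end


theorem proposition1:
  fixes M :: "'a measure"
    and x :: "'a \<Rightarrow> real^'p"
    and xs :: "'n::finite \<Rightarrow> 'a \<Rightarrow> real^'p"
    and g :: "real \<Rightarrow> real"
    and \<beta> :: "real^'p"
    and \<delta> :: real
  assumes "prob_space M"
    and "CARD('p) < CARD('n)"
    \<comment> \<open>x is a random vector; x_1..x_n are i.i.d. copies of x\<close>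
    and "x \<in> borel_measurable M"
    and "prob_space.indep_vars M (\<lambda>_. borel) xs UNIV"
    and "\<And>i. distr M borel (xs i) = distr M borel x"
    \<comment> \<open>E[x] = 0 (with finite second moments, so that E[X^T X] exists)\<close>
    and "integrable M x" and "integral\<^sup>L M x = 0"
    and "integrable M (\<lambda>\<omega>. outer_prod (x \<omega>))"
    \<comment> \<open>link function\<close>
    and "mono g" and "\<And>t. g differentiable (at t)"
    \<comment> \<open>(X^T D X)^{-1} exists with probability 1\<close>
    and "AE \<omega> in M. invertible (transpose (design_matrix xs \<omega>) **
                 weight_matrix g \<beta> (design_matrix xs \<omega>) ** design_matrix xs \<omega>)"
    \<comment> \<open>v_l < \<infinity>\<close>
    and "integrable M (\<lambda>\<omega>. let X = design_matrix xs \<omega>;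
                 A = transpose X ** weight_matrix g \<beta> X ** X in
               matrix_inv A ** (transpose X ** X) ** matrix_inv A)"
    \<comment> \<open>E[g'(x^T \<beta>) | x x^T] = \<delta>\<close>
    and "\<delta> > 0"
    and "AE \<omega> in M. real_cond_exp M (vimage_algebra (space M) (\<lambda>\<omega>. outer_prod (x \<omega>)) borel)
                 (\<lambda>\<omega>. deriv g (x \<omega> \<bullet> \<beta>)) \<omega> = \<delta>"
  shows "v_l M g \<beta> xs > v_u M g \<beta> xs"
  proof -
  interpret glm M x xs g \<beta> \<delta>
  proof (rule glm.intro[OF assms(1)], rule glm_axioms.intro)
  qed (use assms in auto)
  show ?thesis using final[OF assms(11) assms(12)] by simp
qed


end
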